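(* Let $H$ be a countably infinite graph that contains a connected subgraph $F$ such that every vertex of $F$ has finite degree at least $4$ in $H$ and every vertex $v\in V(H)\setminus V(F)$ has a neighbor in $F$. Then $H$ admits a $3$-edge-coloring $c:E(H)\to\{1,2,3\}$ such that all vertices of $F$ and all vertices of infinite degree in $H$ are majority colored. In particular, every locally finite graph $H$ with $\delta(H)\ge 4$ has a majority $3$-edge-coloring.
   Context: A vertex $v$ is majority colored if for every color $\alpha$, the cardinality of the set of edges incident to $v$ colored $\alpha$ is at most the cardinality of the set of edges incident to $v$ not colored $\alpha$. A majority $3$-edge-coloring is a $3$-edge-coloring in which every vertex is majority colored. A graph is locally finite if every vertex has finite degree. *)

theory Defs
  imports Main "HOL-Library.Equipollence" "HOL-Library.Countable_Set"
begin

definition simple_graph :: "'a set \<Rightarrow> 'a set set \<Rightarrow> bool" where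
  "simple_graph V E \<longleftrightarrow> (\<forall>e\<in>E. card e = 2 \<and> e \<subseteq> V)"

definition incident :: "'a set set \<Rightarrow> 'a \<Rightarrow> 'a set set" where
  "incident E v = {e \<in> E. v \<in> e}"

definition finite_degree_ge :: "'a set set \<Rightarrow> nat \<Rightarrow> 'a \<Rightarrow> bool" where
  "finite_degree_ge E k v \<longleftrightarrow> finite (incident E v) \<and> card (incident E v) \<ge> k"

definition locally_finite :: "'a set \<Rightarrow> 'a set set \<Rightarrow> bool" where
  "locally_finite V E \<longleftrightarrow> (\<forall>v\<in>V. finite (incident E v))"

definition subgraph :: "'a set \<Rightarrow> 'a set set \<Rightarrow> 'a set \<Rightarrow> 'a set set \<Rightarrow> bool" where
  "subgraph VF EF V E \<longleftrightarrow> VF \<subseteq> V \<and> EF \<subseteq> E \<and> (\<forall>e\<in>EF. e \<subseteq> VF)"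

definition connected_graph :: "'a set \<Rightarrow> 'a set set \<Rightarrow> bool" where
  "connected_graph V E \<longleftrightarrow> V \<noteq> {} \<and>
     (\<forall>u\<in>V. \<forall>w\<in>V. (\<lambda>x y. {x, y} \<in> E)\<^sup>*\<^sup>* u w)"

definition majority_colored :: "'a set set \<Rightarrow> ('a set \<Rightarrow> nat) \<Rightarrow> 'a \<Rightarrow> bool" where
  "majority_colored E c v \<longleftrightarrow>
     (\<forall>\<alpha>. {e \<in> incident E v. c e = \<alpha>} \<lesssim> {e \<in> incident E v. c e \<noteq> \<alpha>})"

definition edge_3_coloring :: "'a set set \<Rightarrow> ('a set \<Rightarrow> nat) \<Rightarrow> bool" where
  "edge_3_coloring E c \<longleftrightarrow> (\<forall>e\<in>E. c e \<in> {1, 2, 3})"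

end

theory Submission
  imports Defs
begin


locale mg = fixes X :: "'e set" and ends :: "'e \<Rightarrow> 'n set"
  assumes finX: "finite X" and two: "\<And>x. x \<in> X \<Longrightarrow> card (ends x) = 2"
begin

definition cnt :: "('e \<Rightarrow> nat) \<Rightarrow> 'n \<Rightarrow> nat \<Rightarrow> nat" where
  "cnt c w a = card {x\<in>X. w \<in> ends x \<and> c x = a}"

fun walk :: "'n \<Rightarrow> ('e \<times> 'n) list \<Rightarrow> bool" where
  "walk v [] = True"
| "walk v ((x,u)#r) = (x \<in> X \<and> ends x = {v,u} \<and> v \<noteq> u \<and> walk u r)"

fun alt :: "('e \<Rightarrow> nat) \<Rightarrow> nat \<Rightarrow> nat \<Rightarrow> ('e \<times> 'n) list \<Rightarrow> bool" where
  "alt c a b [] = True"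
| "alt c a b ((x,u)#r) = (c x = a \<and> alt c b a r)"

fun lastn :: "'n \<Rightarrow> ('e \<times> 'n) list \<Rightarrow> 'n" where
  "lastn v [] = v"
| "lastn v ((x,u)#r) = lastn u r"

definition tc :: "('e \<Rightarrow> nat) \<Rightarrow> ('e \<times> 'n) list \<Rightarrow> 'n \<Rightarrow> nat \<Rightarrow> nat" where
  "tc c p w a = length (filter (\<lambda>x. w \<in> ends x \<and> c x = a) (map fst p))"

lemma tc_Cons: "tc c ((x,u)#r) w a = (if w \<in> ends x \<and> c x = a then 1 else 0) + tc c r w a"
  by (simp add: tc_def)

lemma walk_tc:
  assumes "walk v p" "alt c a b p" "a \<noteq> b"
  shows "int (tc c p w a) - int (tc c p w b) =
     (if w = v then 1 else 0) - (if w = lastn v p then (if even (length p) then 1 else -1) else 0)"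
  using assms
proof (induction p arbitrary: v a b)
  case Nil
  then show ?case by (simp add: tc_def)
next
  case (Cons q r)
  obtain x u where q: "q = (x,u)" by fastforce
  have IH: "int (tc c r w b) - int (tc c r w a) =
     (if w = u then 1 else 0) - (if w = lastn u r then (if even (length r) then 1 else -1) else 0)"
    using Cons q by auto
  have cx: "c x = a" "ends x = {v,u}" "v \<noteq> u" using Cons q by auto
  have A: "int (if w \<in> ends x \<and> c x = a then 1 else 0) = (if w = v then 1 else 0) + (if w = u then 1 else 0)"
    using cx by auto
  have B: "(if w \<in> ends x \<and> c x = b then 1 else 0) = (0::nat)"
    using cx \<open>a\<noteq>b\<close> by auto
  have L: "lastn v (q#r) = lastn u r" using q by auto
  have E: "(if even (length (q#r)) then 1 else -1) = - (if even (length r) then 1 else (-1::int))"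
    by simp
  have F: "(if w = lastn u r then - (if even (length r) then 1 else -1) else 0) =
     - (if w = lastn u r then (if even (length r) then 1 else -1) else (0::int))" by simp
  have D: "int (tc c (q#r) w a) - int (tc c (q#r) w b) =
     int (if w \<in> ends x \<and> c x = a then 1 else 0) + (int (tc c r w a) - int (tc c r w b))"
    unfolding q tc_Cons B by simp
  show ?case unfolding D A L E F using IH by linarith
qed

definition swp :: "('e \<Rightarrow> nat) \<Rightarrow> nat \<Rightarrow> nat \<Rightarrow> ('e \<times> 'n) list \<Rightarrow> 'e \<Rightarrow> nat" where
  "swp c a b p x = (if x \<in> fst ` set p then (if c x = a then b else a) else c x)"

lemma walk_sub: "walk v p \<Longrightarrow> fst ` set p \<subseteq> X"
  by (induction v p rule: walk.induct) auto

lemma alt_col: "alt c a b p \<Longrightarrow> x \<in> fst ` set p \<Longrightarrow> c x = a \<or> c x = b"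
  by (induction c a b p rule: alt.induct) auto

lemma tc_card: "distinct (map fst p) \<Longrightarrow> tc c p w a = card {x \<in> fst ` set p. w \<in> ends x \<and> c x = a}"
proof -
  assume d: "distinct (map fst p)"
  have "tc c p w a = card ({x. w \<in> ends x \<and> c x = a} \<inter> set (map fst p))"
    unfolding tc_def by (rule distinct_length_filter[OF d])
  also have "{x. w \<in> ends x \<and> c x = a} \<inter> set (map fst p) = {x \<in> fst ` set p. w \<in> ends x \<and> c x = a}"
    by auto
  finally show ?thesis .
qed

lemma cnt_swp:
  assumes "walk v p" "alt c a b p" "distinct (map fst p)" "a \<noteq> b"
  shows "int (cnt (swp c a b p) w a) = int (cnt c w a) - int (tc c p w a) + int (tc c p w b)"
    and "int (cnt (swp c a b p) w b) = int (cnt c w b) + int (tc c p w a) - int (tc c p w b)"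
    and "g \<noteq> a \<Longrightarrow> g \<noteq> b \<Longrightarrow> cnt (swp c a b p) w g = cnt c w g"
proof -
  define T where "T = fst ` set p"
  have TX: "T \<subseteq> X" using walk_sub[OF assms(1)] T_def by simp
  have fT: "finite T" using TX finX finite_subset by blast
  have col: "\<And>x. x \<in> T \<Longrightarrow> c x = a \<or> c x = b" using alt_col[OF assms(2)] T_def by blast
  have sw: "\<And>x. swp c a b p x = (if x \<in> T then (if c x = a then b else a) else c x)"
    unfolding swp_def T_def by simp
  have tca: "tc c p w a = card {x\<in>T. w \<in> ends x \<and> c x = a}" using tc_card[OF assms(3)] T_def by simp
  have tcb: "tc c p w b = card {x\<in>T. w \<in> ends x \<and> c x = b}" using tc_card[OF assms(3)] T_def by simp
  have f1: "finite {x\<in>X-T. w \<in> ends x \<and> c x = a}" using finX by simp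
  have f1b: "finite {x\<in>X-T. w \<in> ends x \<and> c x = b}" using finX by simp
  have f2: "finite {x\<in>T. w \<in> ends x \<and> c x = b}" using fT by simp
  have f3: "finite {x\<in>T. w \<in> ends x \<and> c x = a}" using fT by simp
  have s1: "{x\<in>X. w\<in>ends x \<and> swp c a b p x = a} = {x\<in>X-T. w \<in> ends x \<and> c x = a} \<union> {x\<in>T. w \<in> ends x \<and> c x = b}"
    using sw col TX assms(4) by auto
  have s2: "{x\<in>X. w\<in>ends x \<and> c x = a} = {x\<in>X-T. w \<in> ends x \<and> c x = a} \<union> {x\<in>T. w \<in> ends x \<and> c x = a}"
    using TX by auto
  have s3: "{x\<in>X. w\<in>ends x \<and> swp c a b p x = b} = {x\<in>X-T. w \<in> ends x \<and> c x = b} \<union> {x\<in>T. w \<in> ends x \<and> c x = a}"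
    using sw col TX assms(4) by auto
  have s4: "{x\<in>X. w\<in>ends x \<and> c x = b} = {x\<in>X-T. w \<in> ends x \<and> c x = b} \<union> {x\<in>T. w \<in> ends x \<and> c x = b}"
    using TX by auto
  have "cnt (swp c a b p) w a = card {x\<in>X-T. w \<in> ends x \<and> c x = a} + card {x\<in>T. w \<in> ends x \<and> c x = b}"
    unfolding cnt_def s1 by (rule card_Un_disjoint[OF f1 f2]) auto
  moreover have "cnt c w a = card {x\<in>X-T. w \<in> ends x \<and> c x = a} + card {x\<in>T. w \<in> ends x \<and> c x = a}"
    unfolding cnt_def s2 by (rule card_Un_disjoint[OF f1 f3]) auto
  ultimately show "int (cnt (swp c a b p) w a) = int (cnt c w a) - int (tc c p w a) + int (tc c p w b)"
    using tca tcb by simp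
  have "cnt (swp c a b p) w b = card {x\<in>X-T. w \<in> ends x \<and> c x = b} + card {x\<in>T. w \<in> ends x \<and> c x = a}"
    unfolding cnt_def s3 by (rule card_Un_disjoint[OF f1b f3]) auto
  moreover have "cnt c w b = card {x\<in>X-T. w \<in> ends x \<and> c x = b} + card {x\<in>T. w \<in> ends x \<and> c x = b}"
    unfolding cnt_def s4 by (rule card_Un_disjoint[OF f1b f2]) auto
  ultimately show "int (cnt (swp c a b p) w b) = int (cnt c w b) + int (tc c p w a) - int (tc c p w b)"
    using tca tcb by simp
  assume g: "g \<noteq> a" "g \<noteq> b"
  have "{x\<in>X. w\<in>ends x \<and> swp c a b p x = g} = {x\<in>X. w\<in>ends x \<and> c x = g}"
    using sw col g by auto
  then show "cnt (swp c a b p) w g = cnt c w g" unfolding cnt_def by simp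
qed

definition dl :: "'n \<Rightarrow> ('e \<times> 'n) list \<Rightarrow> 'n \<Rightarrow> int" where
  "dl v p w = (if w = v then 1 else 0) - (if w = lastn v p then (if even (length p) then 1 else -1) else 0)"

lemma move_cnt:
  assumes "walk v p" "alt c a b p" "distinct (map fst p)" "a \<noteq> b"
  shows "int (cnt (swp c a b p) w a) = int (cnt c w a) - dl v p w"
    and "int (cnt (swp c a b p) w b) = int (cnt c w b) + dl v p w"
    and "g \<noteq> a \<Longrightarrow> g \<noteq> b \<Longrightarrow> cnt (swp c a b p) w g = cnt c w g"
  using cnt_swp[OF assms] walk_tc[OF assms(1,2,4), of w] unfolding dl_def by auto

lemma dl_zero: "w \<noteq> v \<Longrightarrow> w \<noteq> lastn v p \<Longrightarrow> dl v p w = 0"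
  unfolding dl_def by simp

lemma swp_lt3: "(\<forall>x. c x < 3) \<Longrightarrow> a < 3 \<Longrightarrow> b < 3 \<Longrightarrow> \<forall>x. swp c a b p x < 3"
  unfolding swp_def by auto

definition deg :: "'n \<Rightarrow> nat" where "deg w = card {x\<in>X. w \<in> ends x}"

lemma deg_sum: assumes "\<forall>x. c x < 3" shows "deg w = cnt c w 0 + cnt c w 1 + cnt c w 2"
proof -
  have e: "{x\<in>X. w \<in> ends x} = {x\<in>X. w \<in> ends x \<and> c x = 0} \<union> {x\<in>X. w \<in> ends x \<and> c x = 1} \<union> {x\<in>X. w \<in> ends x \<and> c x = 2}"
    using assms by (auto simp: less_Suc_eq numeral_3_eq_3)
  show ?thesis unfolding deg_def cnt_def e
    by (subst card_Un_disjoint, use finX in auto)+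
qed

definition loc :: "('e \<Rightarrow> nat) \<Rightarrow> 'n \<Rightarrow> nat" where
  "loc c w = cnt c w 0 ^ 2 + cnt c w 1 ^ 2 + cnt c w 2 ^ 2"

lemma loc_eq: "a < 3 \<Longrightarrow> b < 3 \<Longrightarrow> a \<noteq> b \<Longrightarrow> loc c w = cnt c w a ^ 2 + cnt c w b ^ 2 + cnt c w (3 - a - b) ^ 2"
proof -
  assume "a < 3" "b < 3" "a \<noteq> b"
  then have "a = 0 \<or> a = 1 \<or> a = 2" "b = 0 \<or> b = 1 \<or> b = 2" by auto
  then show ?thesis using \<open>a \<noteq> b\<close> by (auto simp: loc_def)
qed

lemma move_loc:
  assumes "walk v p" "alt c a b p" "distinct (map fst p)" "a \<noteq> b" "a < 3" "b < 3"
  shows "int (loc (swp c a b p) w) = int (loc c w) + 2 * dl v p w * (int (cnt c w b) - int (cnt c w a) + dl v p w)"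
proof -
  have "a = 0 \<or> a = 1 \<or> a = 2" "b = 0 \<or> b = 1 \<or> b = 2" using assms(5,6) by auto
  then have t: "3 - a - b \<noteq> a" "3 - a - b \<noteq> b" using assms(4) by auto
  have "int (loc (swp c a b p) w) = int (cnt (swp c a b p) w a) ^ 2 + int (cnt (swp c a b p) w b) ^ 2 + int (cnt (swp c a b p) w (3-a-b)) ^ 2"
    using loc_eq[OF assms(5,6,4)] by simp
  also have "\<dots> = (int (cnt c w a) - dl v p w)^2 + (int (cnt c w b) + dl v p w)^2 + int (cnt c w (3-a-b))^2"
    using move_cnt[OF assms(1-4), where w=w] move_cnt(3)[OF assms(1-4) t, where w=w] by simp
  also have "\<dots> = int (loc c w) + 2 * dl v p w * (int (cnt c w b) - int (cnt c w a) + dl v p w)"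
    using loc_eq[OF assms(5,6,4), of c w] by (simp add: power2_eq_square algebra_simps)
  finally show ?thesis .
qed

lemma sum_change2:
  assumes "finite S" "\<And>w. w \<in> S \<Longrightarrow> w \<noteq> v \<Longrightarrow> w \<noteq> l \<Longrightarrow> h w = (0::int)"
  shows "(\<Sum>w\<in>S. h w) = (if v \<in> S then h v else 0) + (if l \<in> S \<and> l \<noteq> v then h l else 0)"
proof -
  have "(\<Sum>w\<in>S. h w) = (\<Sum>w\<in>S \<inter> {v,l}. h w)"
    by (rule sum.mono_neutral_right) (use assms in auto)
  also have "\<dots> = (if v \<in> S then h v else 0) + (if l \<in> S \<and> l \<noteq> v then h l else 0)"
  proof (cases "v \<in> S"; cases "l \<in> S"; cases "l = v")
  qed (auto simp: Int_insert_right)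
  finally show ?thesis .
qed

definition phi :: "'n set \<Rightarrow> ('e \<Rightarrow> nat) \<Rightarrow> nat" where
  "phi S c = (\<Sum>w\<in>S. loc c w)"

definition ch :: "('e \<Rightarrow> nat) \<Rightarrow> nat \<Rightarrow> nat \<Rightarrow> 'n \<Rightarrow> ('e \<times> 'n) list \<Rightarrow> 'n \<Rightarrow> int" where
  "ch c a b v p w = 2 * dl v p w * (int (cnt c w b) - int (cnt c w a) + dl v p w)"

lemma move_phi:
  assumes "walk v p" "alt c a b p" "distinct (map fst p)" "a \<noteq> b" "a < 3" "b < 3" "finite S"
  shows "int (phi S (swp c a b p)) = int (phi S c) + (if v \<in> S then ch c a b v p v else 0)
            + (if lastn v p \<in> S \<and> lastn v p \<noteq> v then ch c a b v p (lastn v p) else 0)"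
proof -
  have "int (phi S (swp c a b p)) - int (phi S c) = (\<Sum>w\<in>S. int (loc (swp c a b p) w) - int (loc c w))"
    unfolding phi_def by (simp add: sum_subtractf)
  also have "\<dots> = (\<Sum>w\<in>S. ch c a b v p w)"
    using move_loc[OF assms(1-6)] unfolding ch_def by simp
  also have "\<dots> = (if v \<in> S then ch c a b v p v else 0) + (if lastn v p \<in> S \<and> lastn v p \<noteq> v then ch c a b v p (lastn v p) else 0)"
    by (rule sum_change2[OF assms(7)]) (simp add: ch_def dl_zero)
  finally show ?thesis by simp
qed

lemma move_same:
  assumes "walk v p" "alt c a b p" "distinct (map fst p)" "a \<noteq> b" "w \<noteq> v" "w \<noteq> lastn v p"
  shows "cnt (swp c a b p) w g = cnt c w g"
proof (cases "g = a \<or> g = b")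
  case True
  then show ?thesis using move_cnt[OF assms(1-4), where w=w] dl_zero[OF assms(5,6)] by auto
next
  case False
  then show ?thesis using move_cnt(3)[OF assms(1-4)] by auto
qed

lemma walk_snoc: "walk v (p @ [(y,z)]) = (walk v p \<and> y \<in> X \<and> ends y = {lastn v p, z} \<and> lastn v p \<noteq> z)"
  by (induction p arbitrary: v) auto

lemma alt_snoc: "alt c a b (p @ [(y,z)]) = (alt c a b p \<and> c y = (if even (length p) then a else b))"
  by (induction p arbitrary: a b) auto

lemma lastn_snoc: "lastn v (p @ [(y,z)]) = z"
  by (induction p arbitrary: v) auto

lemma walk_len: "walk v p \<Longrightarrow> distinct (map fst p) \<Longrightarrow> length p \<le> card X"
proof -
  assume w: "walk v p" and d: "distinct (map fst p)"
  have "length p = card (set (map fst p))" using d distinct_card by fastforce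
  also have "\<dots> \<le> card X" using walk_sub[OF w] finX by (simp add: card_mono)
  finally show ?thesis .
qed

lemma other_end: "y \<in> X \<Longrightarrow> w \<in> ends y \<Longrightarrow> \<exists>z. z \<noteq> w \<and> ends y = {w, z}"
proof -
  assume "y \<in> X" "w \<in> ends y"
  then obtain p q where "p \<noteq> q" "ends y = {p,q}" using two card_2_iff by metis
  then show ?thesis using \<open>w \<in> ends y\<close> by auto
qed

lemma cnt_big: "\<forall>x. c x < 3 \<Longrightarrow> 3 \<le> g \<Longrightarrow> cnt c w g = 0"
  unfolding cnt_def by (metis (mono_tags, lifting) card.empty empty_Collect_eq leD)

lemma deg_perm: assumes "\<forall>x. c x < 3" "i < 3" "j < 3" "k < 3" "i \<noteq> j" "i \<noteq> k" "j \<noteq> k"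
  shows "deg w = cnt c w i + cnt c w j + cnt c w k"
proof -
  have "i = 0 \<or> i = 1 \<or> i = 2" "j = 0 \<or> j = 1 \<or> j = 2" "k = 0 \<or> k = 1 \<or> k = 2" using assms by auto
  then show ?thesis using deg_sum[OF assms(1), of w] assms(5-7) by auto
qed

lemma col3: "(a::nat) < 3 \<Longrightarrow> i < 3 \<Longrightarrow> j < 3 \<Longrightarrow> k < 3 \<Longrightarrow> i \<noteq> j \<Longrightarrow> i \<noteq> k \<Longrightarrow> j \<noteq> k \<Longrightarrow> a = i \<or> a = j \<or> a = k"
  by linarith

lemma single_move:
  assumes "e \<in> X" "ends e = {n,u}" "n \<noteq> u" "c e = i" "i \<noteq> g" "i < 3" "g < 3" "finite S" "n \<in> S"
  shows "int (phi S (swp c i g [(e,u)])) = int (phi S c) + 2 * (int (cnt c n g) - int (cnt c n i) + 1)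
           + (if u \<in> S then 2 * (int (cnt c u g) - int (cnt c u i) + 1) else 0)"
proof -
  have w: "walk n [(e,u)]" using assms by simp
  have a: "alt c i g [(e,u)]" using assms by simp
  have d: "distinct (map fst [(e,u)])" by simp
  show ?thesis using move_phi[OF w a d assms(5,6,7,8)] assms(3,9)
    by (simp add: ch_def dl_def)
qed

definition bad :: "('e \<Rightarrow> nat) \<Rightarrow> 'n \<Rightarrow> bool" where
  "bad c w = (\<exists>g. deg w < 2 * cnt c w g)"

definition nb :: "'n set \<Rightarrow> ('e \<Rightarrow> nat) \<Rightarrow> nat" where
  "nb S c = card {w\<in>S. bad c w}"

definition MM :: "'n set \<Rightarrow> ('e \<Rightarrow> nat) \<Rightarrow> nat" where
  "MM S c = (card S + 1) * phi S c + nb S c"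

lemma MM_phi: "finite S \<Longrightarrow> phi S c' < phi S c \<Longrightarrow> MM S c' < MM S c"
proof -
  assume f: "finite S" and l: "phi S c' < phi S c"
  have "nb S c' \<le> card S" unfolding nb_def using f by (simp add: card_mono)
  have "(card S + 1) * phi S c' + card S < (card S + 1) * phi S c"
  proof -
    have "(card S + 1) * phi S c' + (card S + 1) \<le> (card S + 1) * phi S c"
      using l by (metis Suc_eq_plus1 Suc_leI mult_Suc_right mult_le_mono2 add.commute)
    then show ?thesis by linarith
  qed
  then show ?thesis unfolding MM_def using \<open>nb S c' \<le> card S\<close> by linarith
qed

lemma MM_nb: "phi S c' = phi S c \<Longrightarrow> nb S c' < nb S c \<Longrightarrow> MM S c' < MM S c"
  unfolding MM_def by simp

lemma other_two: "(i::nat) < 3 \<Longrightarrow> \<exists>j k. j < 3 \<and> k < 3 \<and> i \<noteq> j \<and> i \<noteq> k \<and> j \<noteq> k \<and> f j \<le> (f k :: nat)"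
proof -
  assume "i < 3"
  then obtain o1 o2 where o: "o1 < 3" "o2 < 3" "i \<noteq> o1" "i \<noteq> o2" "o1 \<noteq> o2"
  proof -
    have "i = 0 \<or> i = 1 \<or> i = 2" using \<open>i < 3\<close> by auto
    moreover { assume "i = 0" then have "\<exists>o1 o2. o1 < (3::nat) \<and> o2 < 3 \<and> i \<noteq> o1 \<and> i \<noteq> o2 \<and> o1 \<noteq> o2"
        by (intro exI[of _ 1] exI[of _ 2]) auto }
    moreover { assume "i = 1" then have "\<exists>o1 o2. o1 < (3::nat) \<and> o2 < 3 \<and> i \<noteq> o1 \<and> i \<noteq> o2 \<and> o1 \<noteq> o2"
        by (intro exI[of _ 0] exI[of _ 2]) auto }
    moreover { assume "i = 2" then have "\<exists>o1 o2. o1 < (3::nat) \<and> o2 < 3 \<and> i \<noteq> o1 \<and> i \<noteq> o2 \<and> o1 \<noteq> o2"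
        by (intro exI[of _ 0] exI[of _ 1]) auto }
    ultimately show ?thesis using that by blast
  qed
  show ?thesis
  proof (cases "f o1 \<le> f o2")
    case True then show ?thesis using o by blast
  next
    case False then show ?thesis using o by (intro exI[of _ o2] exI[of _ o1]) auto
  qed
qed

lemma improve:
  assumes c3: "\<forall>x. c x < 3" and fS: "finite S" and dS: "\<forall>w\<in>S. 4 \<le> deg w" and nS: "n \<in> S"
    and bn: "bad c n"
  shows "\<exists>c'. (\<forall>x. c' x < 3) \<and> MM S c' < MM S c"
proof -
  obtain i where i3: "i < 3" and bi: "deg n < 2 * cnt c n i"
  proof -
    obtain g where g: "deg n < 2 * cnt c n g" using bn unfolding bad_def by blast
    have "g < 3" using cnt_big[OF c3, of g n] g by (metis leI less_nat_zero_code mult_0_right)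
    then show ?thesis using that g by blast
  qed
  obtain j k where jk: "j < 3" "k < 3" "i \<noteq> j" "i \<noteq> k" "j \<noteq> k" "cnt c n j \<le> cnt c n k"
    using other_two[OF i3, of "cnt c n"] by blast
  define A where "A = cnt c n i"
  define B where "B = cnt c n j"
  define K where "K = cnt c n k"
  have dn: "deg n = A + B + K" unfolding A_def B_def K_def using deg_perm[OF c3 i3 jk(1,2,3,4,5)] by simp
  have d4: "4 \<le> deg n" using dS nS by blast
  have BK: "B \<le> K" using jk(6) B_def K_def by simp
  have s2: "B + 2 \<le> A" using dn d4 BK bi A_def by linarith
  have s2e: "A = B + 2 \<Longrightarrow> A = 3 \<and> B = 1 \<and> K = 1" using dn d4 BK bi A_def by linarith
  have "0 < card {x\<in>X. n \<in> ends x \<and> c x = i}" using s2 A_def unfolding cnt_def by linarith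
  then have "{x\<in>X. n \<in> ends x \<and> c x = i} \<noteq> {}" by fastforce
  then obtain e1 where e1: "e1 \<in> X" "n \<in> ends e1" "c e1 = i" by blast
  obtain u1 where u1: "u1 \<noteq> n" "ends e1 = {n, u1}" using other_end[OF e1(1,2)] by blast
  have u1e: "ends e1 = {n,u1}" using u1 by simp
  define P where "P q = (walk n q \<and> alt c i j q \<and> distinct (map fst q) \<and> q \<noteq> [] \<and> hd q = (e1,u1))" for q
  have P1: "P [(e1,u1)]" unfolding P_def using e1 u1 by auto
  have Pb: "\<forall>q. P q \<longrightarrow> length q < card X + 1" unfolding P_def using walk_len by fastforce
  obtain W where PW: "P W" and Wmax: "\<forall>q. P q \<longrightarrow> length q \<le> length W"
    using ex_has_greatest_nat[of P "[(e1,u1)]" length "card X + 1", OF P1 Pb] by blast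
  have wW: "walk n W" and aW: "alt c i j W" and dW: "distinct (map fst W)" and nW: "W \<noteq> []"
    and hW: "hd W = (e1,u1)" using PW unfolding P_def by auto
  define l where "l = lastn n W"
  define T where "T = fst ` set W"
  have TX: "T \<subseteq> X" using walk_sub[OF wW] T_def by simp
  define nc where "nc = (if even (length W) then i else j)"
  have stuck: "y \<in> T" if y: "y \<in> X" "l \<in> ends y" "c y = nc" for y
  proof (rule ccontr)
    assume yT: "y \<notin> T"
    obtain z where z: "z \<noteq> l" "ends y = {l, z}" using other_end[OF y(1,2)] by blast
    have "P (W @ [(y,z)])" unfolding P_def
      using wW aW dW nW hW y z yT walk_snoc alt_snoc l_def nc_def T_def by auto
    then have "length (W @ [(y,z)]) \<le> length W" using Wmax by blast
    then show False by simp
  qed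
  have tc_l: "tc c W l nc = cnt c l nc"
  proof -
    have "{x \<in> T. l \<in> ends x \<and> c x = nc} = {x\<in>X. l \<in> ends x \<and> c x = nc}"
      using stuck TX by auto
    then show ?thesis using tc_card[OF dW] T_def unfolding cnt_def by simp
  qed
  have tc_le: "tc c W l g \<le> cnt c l g" for g
  proof -
    have "{x \<in> T. l \<in> ends x \<and> c x = g} \<subseteq> {x\<in>X. l \<in> ends x \<and> c x = g}" using TX by auto
    then show ?thesis using tc_card[OF dW] T_def finX unfolding cnt_def by (simp add: card_mono)
  qed
  have wt: "int (tc c W l i) - int (tc c W l j) = (if l = n then 1 else 0) - (if even (length W) then 1 else -1)"
    using walk_tc[OF wW aW jk(3), of l] l_def by simp
  have sm: "int (phi S (swp c i g [(e1,u1)])) = int (phi S c) + 2 * (int (cnt c n g) - int A + 1)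
           + (if u1 \<in> S then 2 * (int (cnt c u1 g) - int (cnt c u1 i) + 1) else 0)"
    if "g < 3" "i \<noteq> g" for g
    using single_move[of e1 n u1 c i g S, OF e1(1) u1e u1(1)[symmetric] e1(3) that(2) i3 that(1) fS nS] A_def by simp
  have sm3: "\<forall>x. swp c i g [(e1,u1)] x < 3" if "g < 3" for g using swp_lt3[OF c3 i3 that] .
  show ?thesis
  proof (cases "l = n")
    case False
    have c'3: "\<forall>x. swp c i j W x < 3" using swp_lt3[OF c3 i3 jk(1)] .
    have ph: "int (phi S (swp c i j W)) = int (phi S c) + ch c i j n W n + (if l \<in> S \<and> l \<noteq> n then ch c i j n W l else 0)"
      using move_phi[OF wW aW dW jk(3) i3 jk(1) fS] nS l_def by simp
    have chn: "ch c i j n W n = 2 * (int B - int A + 1)"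
      unfolding ch_def dl_def using False l_def A_def B_def by auto
    have chl: "ch c i j n W l \<le> 0"
    proof (cases "even (length W)")
      case True
      then have "tc c W l i = cnt c l i" using tc_l nc_def by simp
      moreover have "int (tc c W l i) - int (tc c W l j) = -1" using wt False True by simp
      moreover have "tc c W l j \<le> cnt c l j" using tc_le by blast
      ultimately have "int (cnt c l j) \<ge> int (cnt c l i) + 1" by linarith
      then show ?thesis unfolding ch_def dl_def using True False l_def by (simp add: algebra_simps)
    next
      case odd: False
      then have "tc c W l j = cnt c l j" using tc_l nc_def by simp
      moreover have "int (tc c W l i) - int (tc c W l j) = 1" using wt False odd by simp
      moreover have "tc c W l i \<le> cnt c l i" using tc_le by blast
      ultimately have "int (cnt c l i) \<ge> int (cnt c l j) + 1" by linarith
      then show ?thesis unfolding ch_def dl_def using odd False l_def by (simp add: algebra_simps)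
    qed
    have s2i: "int B + 2 \<le> int A" using s2 by simp
    define rr where "rr = (if l \<in> S \<and> l \<noteq> n then ch c i j n W l else 0)"
    have rr0: "rr \<le> 0" using chl rr_def by simp
    have ph': "int (phi S (swp c i j W)) = int (phi S c) + ch c i j n W n + rr" using ph rr_def by simp
    have "int (phi S (swp c i j W)) < int (phi S c)" using ph' rr0 chn s2i by arith
    then have "phi S (swp c i j W) < phi S c" by simp
    then show ?thesis using MM_phi[OF fS] c'3 by blast
  next
    case True
    have oddW: "odd (length W)"
    proof
      assume ev: "even (length W)"
      then have "tc c W l i = cnt c l i" using tc_l nc_def by simp
      moreover have "int (tc c W l i) - int (tc c W l j) = 0" using wt True ev by simp
      moreover have "tc c W l j \<le> cnt c l j" using tc_le by blast
      ultimately have "cnt c l i \<le> cnt c l j" by linarith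
      then show False using True A_def B_def s2 by simp
    qed
    obtain W2 where W2: "W = (e1,u1) # W2" using nW hW by (cases W) auto
    have W2n: "W2 \<noteq> []" using W2 True l_def u1(1) by auto
    have wW2: "walk u1 W2" and aW2: "alt c j i W2" and dW2: "distinct (map fst W2)"
      using wW aW dW W2 by auto
    have lW2: "lastn u1 W2 = n" using True l_def W2 by simp
    have eW2: "even (length W2)" using oddW W2 by simp
    have ph2: "int (phi S (swp c j i W2)) = int (phi S c) + (if u1 \<in> S then ch c j i u1 W2 u1 else 0)
          + (if n \<in> S \<and> n \<noteq> u1 then ch c j i u1 W2 n else 0)"
      using move_phi[OF wW2 aW2 dW2 jk(3)[symmetric] jk(1) i3 fS] lW2 by simp
    have ch2u: "ch c j i u1 W2 u1 = 2 * (int (cnt c u1 i) - int (cnt c u1 j) + 1)"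
      unfolding ch_def dl_def using lW2 u1(1) by simp
    have ch2n: "ch c j i u1 W2 n = - 2 * (int A - int B - 1)"
      unfolding ch_def dl_def using lW2 u1(1) eW2 A_def B_def by (simp add: algebra_simps)
    have c2'3: "\<forall>x. swp c j i W2 x < 3" using swp_lt3[OF c3 jk(1) i3] .
    show ?thesis
    proof (cases "u1 \<in> S")
      case False
      have "int (phi S (swp c i j [(e1,u1)])) = int (phi S c) + 2 * (int B - int A + 1)"
        using sm[OF jk(1) jk(3)] False B_def by simp
      moreover have s2i: "int B + 2 \<le> int A" using s2 by simp
      ultimately have "int (phi S (swp c i j [(e1,u1)])) < int (phi S c)" by arith
      then have "phi S (swp c i j [(e1,u1)]) < phi S c" by simp
      then show ?thesis using MM_phi[OF fS] sm3[OF jk(1)] by blast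
    next
      case uS: True
      have D1: "int (phi S (swp c i j [(e1,u1)])) = int (phi S c) + 2 * (int B - int A + 1)
           + 2 * (int (cnt c u1 j) - int (cnt c u1 i) + 1)"
        using sm[OF jk(1) jk(3)] uS B_def by simp
      have D2: "int (phi S (swp c j i W2)) = int (phi S c) + 2 * (int (cnt c u1 i) - int (cnt c u1 j) + 1)
           - 2 * (int A - int B - 1)"
        using ph2 uS nS u1(1) ch2u ch2n by simp
      show ?thesis
      proof (cases "phi S (swp c i j [(e1,u1)]) < phi S c \<or> phi S (swp c j i W2) < phi S c")
        case True
        then show ?thesis using MM_phi[OF fS] sm3[OF jk(1)] c2'3 by blast
      next
        case nodec: False
        have n1: "\<not> int (phi S (swp c i j [(e1,u1)])) < int (phi S c)"
          and n2: "\<not> int (phi S (swp c j i W2)) < int (phi S c)" using nodec by simp+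
        have s2i: "int B + 2 \<le> int A" using s2 by simp
        have D1': "int (phi S (swp c i j [(e1,u1)])) = int (phi S c) + 2 * int B - 2 * int A + 4
           + 2 * int (cnt c u1 j) - 2 * int (cnt c u1 i)" using D1 by (simp add: algebra_simps)
        have D2': "int (phi S (swp c j i W2)) = int (phi S c) + 2 * int (cnt c u1 i) - 2 * int (cnt c u1 j)
           - 2 * int A + 2 * int B + 4" using D2 by (simp add: algebra_simps)
        have "int A = int B + 2" and eqi: "int (cnt c u1 i) = int (cnt c u1 j)" using D1' D2' n1 n2 s2i by linarith+
        then have AB: "A = B + 2" and eqij: "cnt c u1 i = cnt c u1 j" by simp+
        have ABK: "A = 3" "B = 1" "K = 1" using s2e[OF AB] by auto
        define a where "a = cnt c u1 i"
        define m where "m = cnt c u1 k"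
        have D3: "int (phi S (swp c i k [(e1,u1)])) = int (phi S c) + 2 * (int m - int a)"
          using sm[OF jk(2) jk(4)] uS ABK K_def[symmetric] a_def m_def by simp
        show ?thesis
        proof (cases "m < a")
          case True
          then have "int m < int a" by simp
          then have "int (phi S (swp c i k [(e1,u1)])) < int (phi S c)" using D3 by arith
          then have "phi S (swp c i k [(e1,u1)]) < phi S c" by simp
          then show ?thesis using MM_phi[OF fS] sm3[OF jk(2)] by blast
        next
          case False
          define c' where "c' = swp c i j [(e1,u1)]"
          have phieq: "phi S c' = phi S c" using D1 eqij ABK c'_def by simp
          have wp: "walk n [(e1,u1)]" using e1 u1 by simp
          have ap: "alt c i j [(e1,u1)]" using e1 by simp
          have dp: "distinct (map fst [(e1,u1)])" by simp
          have dlp: "dl n [(e1,u1)] w = (if w = n then 1 else 0) + (if w = u1 then 1 else 0)" for w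
            unfolding dl_def by simp
          have ci: "int (cnt c' w i) = int (cnt c w i) - dl n [(e1,u1)] w" for w
            using move_cnt(1)[OF wp ap dp jk(3)] c'_def by simp
          have cj: "int (cnt c' w j) = int (cnt c w j) + dl n [(e1,u1)] w" for w
            using move_cnt(2)[OF wp ap dp jk(3)] c'_def by simp
          have ck: "cnt c' w k = cnt c w k" for w
            using move_cnt(3)[OF wp ap dp jk(3) jk(4)[symmetric] jk(5)[symmetric]] c'_def by simp
          have c'3: "\<forall>x. c' x < 3" using sm3[OF jk(1)] c'_def by simp
          have same: "cnt c' w g = cnt c w g" if "w \<noteq> n" "w \<noteq> u1" for w g
            using move_same[OF wp ap dp jk(3)] that c'_def by simp
          have allg: "\<And>g d. cnt c' d g \<noteq> 0 \<Longrightarrow> g = i \<or> g = j \<or> g = k"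
            using cnt_big[OF c'3] col3[OF _ i3 jk(1,2,3,4,5)] by (meson not_less)
          have ngood: "\<not> bad c' n"
          proof -
            have "cnt c' n i = 2" using ci[of n] dlp[of n] u1(1) ABK A_def by simp
            moreover have "cnt c' n j = 2" using cj[of n] dlp[of n] u1(1) ABK B_def by simp
            moreover have "cnt c' n k = 1" using ck[of n] ABK K_def by simp
            moreover have "deg n = 5" using dn ABK by simp
            ultimately have "2 * cnt c' n g \<le> deg n" for g
              using allg[of n g] by (cases "cnt c' n g = 0") auto
            then show ?thesis unfolding bad_def by (simp add: not_less)
          qed
          have ugood: "bad c' u1 \<Longrightarrow> bad c u1"
          proof -
            assume b': "bad c' u1"
            have du: "deg u1 = a + cnt c u1 j + m" using deg_perm[OF c3 i3 jk(1,2,3,4,5)] a_def m_def by simp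
            have d4u: "4 \<le> deg u1" using dS uS by blast
            have "cnt c' u1 i = a - 1" using ci[of u1] dlp[of u1] u1(1) a_def by simp
            moreover have "cnt c' u1 j = a + 1" using cj[of u1] dlp[of u1] u1(1) a_def eqij by simp
            moreover have "cnt c' u1 k = m" using ck[of u1] m_def by simp
            moreover have "a \<le> m" using False by simp
            ultimately have cu: "cnt c' u1 i = a - 1" "cnt c' u1 j = a + 1" "cnt c' u1 k = m" "a \<le> m" by auto
            obtain g where g: "deg u1 < 2 * cnt c' u1 g" using b' unfolding bad_def by blast
            then have "cnt c' u1 g \<noteq> 0" by auto
            then have "g = i \<or> g = j \<or> g = k" using allg by blast
            moreover have "deg u1 = a + a + m" using du eqij a_def by simp
            ultimately have "g = k" using g cu d4u by auto
            then have "deg u1 < 2 * cnt c u1 k" using g cu m_def by simp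
            then show "bad c u1" unfolding bad_def by blast
          qed
          have sub: "{w\<in>S. bad c' w} \<subset> {w\<in>S. bad c w}"
          proof
            show "{w\<in>S. bad c' w} \<subseteq> {w\<in>S. bad c w}"
            proof
              fix w assume "w \<in> {w\<in>S. bad c' w}"
              then have wS: "w \<in> S" and bw: "bad c' w" by auto
              show "w \<in> {w\<in>S. bad c w}"
              proof (cases "w = n \<or> w = u1")
                case True then show ?thesis using ngood ugood bw wS by auto
              next
                case False then have "\<forall>g. cnt c' w g = cnt c w g" using same by auto
                then show ?thesis using bw wS unfolding bad_def by simp
              qed
            qed
            show "{w\<in>S. bad c' w} \<noteq> {w\<in>S. bad c w}" using ngood bn nS by blast
          qed
          have "nb S c' < nb S c" unfolding nb_def using sub fS by (simp add: psubset_card_mono)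
          then show ?thesis using MM_nb[OF phieq] c'3 by blast
        qed
      qed
    qed
  qed
qed

lemma fin_main:
  assumes fS: "finite S" and dS: "\<forall>w\<in>S. 4 \<le> deg w"
  shows "\<exists>c. (\<forall>x. c x < 3) \<and> (\<forall>w\<in>S. \<forall>g. 2 * cnt c w g \<le> deg w)"
proof -
  obtain c where c3: "\<forall>x. c x < 3" and cmin: "\<forall>c'. (\<forall>x. c' x < 3) \<longrightarrow> MM S c \<le> MM S c'"
    using ex_has_least_nat[of "\<lambda>c. \<forall>x. c x < (3::nat)" "\<lambda>_. 0" "MM S"] by auto
  have "\<not> bad c w" if wS: "w \<in> S" for w
  proof
    assume bw: "bad c w"
    obtain c' where c'3: "\<forall>x. c' x < 3" and lt: "MM S c' < MM S c" using improve[OF c3 fS dS wS bw] by blast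
    have "MM S c \<le> MM S c'" using cmin c'3 by blast
    then show False using lt by linarith
  qed
  then have "\<forall>w\<in>S. \<forall>g. 2 * cnt c w g \<le> deg w" unfolding bad_def by (simp add: not_less)
  then show ?thesis using c3 by blast
qed

end




lemma fin_groups:
  fixes G :: "'e set set"
  assumes fG: "finite G" and gG: "\<forall>g\<in>G. finite g \<and> 4 \<le> card g" and two2: "\<forall>x. card {g\<in>G. x \<in> g} \<le> 2"
  shows "\<exists>c. (\<forall>x. c x < (3::nat)) \<and> (\<forall>g\<in>G. \<forall>a. 2 * card {x\<in>g. c x = a} \<le> card g)"
proof -
  define X where "X = \<Union>G"
  define ends where "ends x = Some ` {g\<in>G. x \<in> g} \<union> (if card {g\<in>G. x \<in> g} = 1 then {None} else {})" for x
  have fX: "finite X" unfolding X_def using fG gG by auto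
  have two: "card (ends x) = 2" if "x \<in> X" for x
  proof -
    define A where "A = {g\<in>G. x \<in> g}"
    have fA: "finite A" using fG A_def by simp
    have "A \<noteq> {}" using that X_def A_def by auto
    then have "card A \<ge> 1" using fA by (simp add: Suc_le_eq card_gt_0_iff)
    moreover have "card A \<le> 2" using two2 A_def by simp
    ultimately have c12: "card A = 1 \<or> card A = 2" by linarith
    have cS: "card (Some ` A) = card A" by (simp add: card_image)
    from c12 show ?thesis
    proof
      assume "card A = 1"
      then have "ends x = insert None (Some ` A)" unfolding ends_def A_def by auto
      then show ?thesis using cS \<open>card A = 1\<close> fA by simp
    next
      assume "card A = 2"
      then have "ends x = Some ` A" unfolding ends_def A_def by auto
      then show ?thesis using cS \<open>card A = 2\<close> by simp
    qed
  qed
  interpret mg X ends using fX two by unfold_locales auto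
  define S where "S = Some ` G"
  have inc: "{x\<in>X. Some g \<in> ends x} = g" if gG1: "g \<in> G" for g
  proof -
    have e: "Some g \<in> ends x \<longleftrightarrow> x \<in> g" for x
    proof -
      have "Some g \<notin> (if card {g\<in>G. x \<in> g} = 1 then {None} else {})" by simp
      then have "Some g \<in> ends x \<longleftrightarrow> Some g \<in> Some ` {g\<in>G. x \<in> g}" unfolding ends_def by blast
      also have "\<dots> \<longleftrightarrow> g \<in> G \<and> x \<in> g" by blast
      finally show ?thesis using gG1 by blast
    qed
    show ?thesis using e gG1 unfolding X_def by blast
  qed
  have degS: "\<forall>w\<in>S. 4 \<le> deg w" unfolding S_def deg_def using inc gG by auto
  have fS: "finite S" using fG S_def by simp
  obtain c where c3: "\<forall>x. c x < 3" and cc: "\<forall>w\<in>S. \<forall>a. 2 * cnt c w a \<le> deg w"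
    using fin_main[OF fS degS] by blast
  have "\<forall>g\<in>G. \<forall>a. 2 * card {x\<in>g. c x = a} \<le> card g"
  proof (intro ballI allI)
    fix g a assume g: "g \<in> G"
    have "cnt c (Some g) a = card {x\<in>g. c x = a}"
    proof -
      have "{x\<in>X. Some g \<in> ends x \<and> c x = a} = {x\<in>g. c x = a}" using inc[OF g] by auto
      then show ?thesis unfolding cnt_def by simp
    qed
    moreover have "deg (Some g) = card g" unfolding deg_def using inc[OF g] by simp
    moreover have "Some g \<in> S" using g S_def by simp
    then have "2 * cnt c (Some g) a \<le> deg (Some g)" using cc by blast
    ultimately show "2 * card {x\<in>g. c x = a} \<le> card g" by simp
  qed
  then show ?thesis using c3 by blast
qed

lemma compactness:
  fixes G :: "'e set set" and P :: "'e set \<Rightarrow> ('e \<Rightarrow> nat) \<Rightarrow> bool"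
  assumes fin: "\<forall>g\<in>G. finite g"
    and loc: "\<And>G0. finite G0 \<Longrightarrow> G0 \<subseteq> G \<Longrightarrow> \<exists>c. (\<forall>x. c x < 3) \<and> (\<forall>g\<in>G0. P g c)"
    and Pcong: "\<And>g c c'. (\<forall>x\<in>g. c x = c' x) \<Longrightarrow> P g c = P g c'"
  shows "\<exists>c. (\<forall>x. c x < 3) \<and> (\<forall>g\<in>G. P g c)"
proof -
  define good where "good R = (\<forall>G0 D. finite G0 \<longrightarrow> G0 \<subseteq> G \<longrightarrow> finite D \<longrightarrow>
      (\<exists>c. (\<forall>x. c x < 3) \<and> (\<forall>g\<in>G0. P g c) \<and> (\<forall>x a. (x,a) \<in> R \<longrightarrow> x \<in> D \<longrightarrow> c x = a)))" for R :: "('e \<times> nat) set"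
  define sv where "sv R = (\<forall>x a b. (x,a) \<in> R \<longrightarrow> (x,b) \<in> R \<longrightarrow> a = b)" for R :: "('e \<times> nat) set"
  define AA where "AA = {R. sv R \<and> good R}"
  have lt3: "a < 3" if "good R" "(x,a) \<in> R" for R x a
  proof -
    obtain c where "\<forall>x. c x < 3" "\<forall>x' a'. (x',a') \<in> R \<longrightarrow> x' \<in> {x} \<longrightarrow> c x' = a'"
      using \<open>good R\<close>[unfolded good_def, rule_format, of "{}" "{x}"] by auto
    then show ?thesis using that(2) by force
  qed
  have "good {}" unfolding good_def
  proof (intro allI impI)
    fix G0 and D :: "'e set" assume "finite G0" "G0 \<subseteq> G" "finite D"
    then obtain c where "\<forall>x. c x < 3" "\<forall>g\<in>G0. P g c" using loc by blast
    then show "\<exists>c. (\<forall>x. c x < 3) \<and> (\<forall>g\<in>G0. P g c) \<and> (\<forall>x a. (x,a) \<in> {} \<longrightarrow> x \<in> D \<longrightarrow> c x = a)"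
      by blast
  qed
  then have "{} \<in> AA" unfolding AA_def sv_def by simp
  then have ne: "AA \<noteq> {}" by blast
  have ch: "\<Union>C \<in> AA" if Cne: "C \<noteq> {}" and Cch: "subset.chain AA C" for C
  proof -
    have CA: "C \<subseteq> AA" and cmp: "\<And>R1 R2. R1 \<in> C \<Longrightarrow> R2 \<in> C \<Longrightarrow> R1 \<subseteq> R2 \<or> R2 \<subseteq> R1"
      using Cch unfolding subset.chain_def by auto
    have "sv (\<Union>C)" unfolding sv_def
    proof (intro allI impI)
      fix x a b assume "(x,a) \<in> \<Union>C" "(x,b) \<in> \<Union>C"
      then obtain R1 R2 where "R1 \<in> C" "R2 \<in> C" "(x,a) \<in> R1" "(x,b) \<in> R2" by blast
      then show "a = b" using cmp CA unfolding AA_def sv_def by blast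
    qed
    moreover have "good (\<Union>C)" unfolding good_def
    proof (intro allI impI)
      fix G0 and D :: "'e set" assume G0: "finite G0" "G0 \<subseteq> G" and D: "finite D"
      define F where "F = {p \<in> \<Union>C. fst p \<in> D}"
      have "F \<subseteq> D \<times> {..<3}"
      proof
        fix p assume "p \<in> F"
        then obtain R where "R \<in> C" "p \<in> R" "fst p \<in> D" unfolding F_def by blast
        moreover then have "good R" using CA AA_def by blast
        ultimately show "p \<in> D \<times> {..<3}" using lt3[of R "fst p" "snd p"] by (cases p) auto
      qed
      then have fF: "finite F" using D by (meson finite_SigmaI finite_lessThan finite_subset)
      obtain R where R: "R \<in> C" "F \<subseteq> R"
        using finite_subset_Union_chain[OF fF _ Cne Cch] F_def by blast
      then have "good R" using CA AA_def by blast
      then obtain c where c: "\<forall>x. c x < 3" "\<forall>g\<in>G0. P g c" "\<forall>x a. (x,a) \<in> R \<longrightarrow> x \<in> D \<longrightarrow> c x = a"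
        using \<open>good R\<close>[unfolded good_def, rule_format, OF G0 D] by blast
      have "\<forall>x a. (x,a) \<in> \<Union>C \<longrightarrow> x \<in> D \<longrightarrow> c x = a" using c(3) R(2) F_def by auto
      then show "\<exists>c. (\<forall>x. c x < 3) \<and> (\<forall>g\<in>G0. P g c) \<and> (\<forall>x a. (x,a) \<in> \<Union>C \<longrightarrow> x \<in> D \<longrightarrow> c x = a)"
        using c by blast
    qed
    ultimately show ?thesis unfolding AA_def by blast
  qed
  obtain M where MA: "M \<in> AA" and Mmax: "\<forall>X\<in>AA. M \<subseteq> X \<longrightarrow> X = M"
    using subset_Zorn_nonempty[OF ne ch] by blast
  have svM: "sv M" and gM: "good M" using MA AA_def by auto
  have tot: "\<exists>a. (x,a) \<in> M" for x
  proof (rule ccontr)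
    assume nx: "\<nexists>a. (x,a) \<in> M"
    have bad: "\<exists>G0 D. finite G0 \<and> G0 \<subseteq> G \<and> finite D \<and>
        \<not> (\<exists>c. (\<forall>x. c x < 3) \<and> (\<forall>g\<in>G0. P g c) \<and> (\<forall>y b. (y,b) \<in> insert (x,a) M \<longrightarrow> y \<in> D \<longrightarrow> c y = b))" for a
    proof -
      have "sv (insert (x,a) M)" using svM nx unfolding sv_def by auto
      moreover have "insert (x,a) M \<noteq> M" using nx by auto
      ultimately have "insert (x,a) M \<notin> AA" using Mmax by blast
      then have "\<not> good (insert (x,a) M)" using \<open>sv (insert (x,a) M)\<close> unfolding AA_def by blast
      then show ?thesis unfolding good_def by (simp add: not_all)
    qed
    obtain G0 D0 where g0: "finite G0" "G0 \<subseteq> G" "finite D0" "\<not> (\<exists>c. (\<forall>x. c x < 3) \<and> (\<forall>g\<in>G0. P g c) \<and> (\<forall>y b. (y,b) \<in> insert (x,0) M \<longrightarrow> y \<in> D0 \<longrightarrow> c y = b))"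
      using bad[of 0] by blast
    obtain G1 D1 where g1: "finite G1" "G1 \<subseteq> G" "finite D1" "\<not> (\<exists>c. (\<forall>x. c x < 3) \<and> (\<forall>g\<in>G1. P g c) \<and> (\<forall>y b. (y,b) \<in> insert (x,1) M \<longrightarrow> y \<in> D1 \<longrightarrow> c y = b))"
      using bad[of 1] by blast
    obtain G2 D2 where g2: "finite G2" "G2 \<subseteq> G" "finite D2" "\<not> (\<exists>c. (\<forall>x. c x < 3) \<and> (\<forall>g\<in>G2. P g c) \<and> (\<forall>y b. (y,b) \<in> insert (x,2) M \<longrightarrow> y \<in> D2 \<longrightarrow> c y = b))"
      using bad[of 2] by blast
    define G' where "G' = G0 \<union> G1 \<union> G2"
    define D' where "D' = D0 \<union> D1 \<union> D2"
    have "finite G'" "G' \<subseteq> G" "finite D'" using g0 g1 g2 unfolding G'_def D'_def by auto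
    then obtain c where c: "\<forall>x. c x < 3" "\<forall>g\<in>G'. P g c" "\<forall>y b. (y,b) \<in> M \<longrightarrow> y \<in> D' \<longrightarrow> c y = b"
      using gM[unfolded good_def, rule_format, of G' D'] by blast
    have a3: "c x = 0 \<or> c x = 1 \<or> c x = 2" using c(1)[rule_format, of x] by auto
    then show False
    proof (elim disjE)
      assume cx: "c x = 0"
      have "\<forall>g\<in>G0. P g c" using c(2) unfolding G'_def by blast
      moreover have "\<forall>y b. (y,b) \<in> insert (x,0) M \<longrightarrow> y \<in> D0 \<longrightarrow> c y = b"
        using c(3) cx unfolding D'_def by blast
      ultimately show False using g0(4) c(1) by blast
    next
      assume cx: "c x = 1"
      have "\<forall>g\<in>G1. P g c" using c(2) unfolding G'_def by blast
      moreover have "\<forall>y b. (y,b) \<in> insert (x,1) M \<longrightarrow> y \<in> D1 \<longrightarrow> c y = b"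
        using c(3) cx unfolding D'_def by blast
      ultimately show False using g1(4) c(1) by blast
    next
      assume cx: "c x = 2"
      have "\<forall>g\<in>G2. P g c" using c(2) unfolding G'_def by blast
      moreover have "\<forall>y b. (y,b) \<in> insert (x,2) M \<longrightarrow> y \<in> D2 \<longrightarrow> c y = b"
        using c(3) cx unfolding D'_def by blast
      ultimately show False using g2(4) c(1) by blast
    qed
  qed
  define c where "c x = (SOME a. (x,a) \<in> M)" for x
  have cM: "(x, c x) \<in> M" for x unfolding c_def using tot[of x] by (rule someI_ex)
  have c3: "\<forall>x. c x < 3" using lt3[OF gM cM] by blast
  have "P g c" if gG: "g \<in> G" for g
  proof -
    have "finite g" using fin gG by blast
    then obtain c' where c': "\<forall>g'\<in>{g}. P g' c'" "\<forall>y b. (y,b) \<in> M \<longrightarrow> y \<in> g \<longrightarrow> c' y = b"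
      using gM[unfolded good_def, rule_format, of "{g}" g] gG by auto
    have "\<forall>y\<in>g. c' y = c y" using c'(2) cM by blast
    then have "P g c' = P g c" using Pcong[of g c' c] by blast
    then show ?thesis using c'(1) by simp
  qed
  then show ?thesis using c3 by blast
qed

lemma core:
  fixes G :: "'e set set"
  assumes gG: "\<forall>g\<in>G. finite g \<and> 4 \<le> card g"
    and two2: "\<forall>x. finite {g\<in>G. x \<in> g} \<and> card {g\<in>G. x \<in> g} \<le> 2"
  shows "\<exists>c. (\<forall>x. c x < (3::nat)) \<and> (\<forall>g\<in>G. \<forall>a. 2 * card {x\<in>g. c x = a} \<le> card g)"
proof -
  define P where "P g c = (\<forall>a. 2 * card {x\<in>g. c x = a} \<le> card g)" for g :: "'e set" and c :: "'e \<Rightarrow> nat"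
  have "\<exists>c. (\<forall>x. c x < 3) \<and> (\<forall>g\<in>G. P g c)"
  proof (rule compactness)
    show "\<forall>g\<in>G. finite g" using gG by blast
  next
    fix G0 assume G0: "finite G0" "G0 \<subseteq> G"
    have "\<forall>x. card {g\<in>G0. x \<in> g} \<le> 2"
    proof
      fix x
      have "card {g\<in>G0. x \<in> g} \<le> card {g\<in>G. x \<in> g}"
        using two2 G0 by (intro card_mono) auto
      then show "card {g\<in>G0. x \<in> g} \<le> 2" using two2 by (meson le_trans)
    qed
    moreover have "\<forall>g\<in>G0. finite g \<and> 4 \<le> card g" using gG G0 by blast
    ultimately show "\<exists>c. (\<forall>x. c x < 3) \<and> (\<forall>g\<in>G0. P g c)"
      using fin_groups[OF G0(1)] unfolding P_def by blast
  next
    fix g and c c' :: "'e \<Rightarrow> nat" assume "\<forall>x\<in>g. c x = c' x"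
    then have "\<And>a. {x\<in>g. c x = a} = {x\<in>g. c' x = a}" by auto
    then show "P g c = P g c'" unfolding P_def by simp
  qed
  then show ?thesis unfolding P_def by blast
qed

lemma maj_finite:
  assumes fI: "finite I" and m: "\<forall>a. 2 * card {x\<in>I. c x = a} \<le> card I"
  shows "{e\<in>I. Suc (c e) = \<alpha>} \<lesssim> {e\<in>I. Suc (c e) \<noteq> \<alpha>}"
proof (cases \<alpha>)
  case 0
  then show ?thesis by simp
next
  case (Suc b)
  have A: "{e\<in>I. Suc (c e) = \<alpha>} = {e\<in>I. c e = b}" using Suc by auto
  have B: "{e\<in>I. Suc (c e) \<noteq> \<alpha>} = {e\<in>I. c e \<noteq> b}" using Suc by auto
  have "card I = card {e\<in>I. c e = b} + card {e\<in>I. c e \<noteq> b}"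
  proof -
    have "I = {e\<in>I. c e = b} \<union> {e\<in>I. c e \<noteq> b}" by auto
    then have "card I = card ({e\<in>I. c e = b} \<union> {e\<in>I. c e \<noteq> b})" by simp
    also have "\<dots> = card {e\<in>I. c e = b} + card {e\<in>I. c e \<noteq> b}"
      by (rule card_Un_disjoint) (use fI in auto)
    finally show ?thesis .
  qed
  then have "card {e\<in>I. c e = b} \<le> card {e\<in>I. c e \<noteq> b}" using m[rule_format, of b] by linarith
  then show ?thesis unfolding A B using fI by (simp add: lepoll_iff_card_le)
qed

lemma maj_colored_finite:
  assumes "finite (incident E v)" "\<forall>a. 2 * card {x\<in>incident E v. c x = a} \<le> card (incident E v)"
  shows "majority_colored E (\<lambda>e. Suc (c e)) v"
  unfolding majority_colored_def using maj_finite[OF assms] by blast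

lemma edge3: "\<forall>x. c x < (3::nat) \<Longrightarrow> edge_3_coloring E (\<lambda>e. Suc (c e))"
  unfolding edge_3_coloring_def by (auto simp: less_Suc_eq numeral_3_eq_3)

lemma countable_edges:
  assumes "simple_graph V E" "countable V"
  shows "countable E"
proof -
  have "E \<subseteq> (\<lambda>(a,b). {a,b}) ` (V \<times> V)"
  proof
    fix e assume e: "e \<in> E"
    then have "card e = 2" "e \<subseteq> V" using assms(1) unfolding simple_graph_def by auto
    then obtain a b where "e = {a,b}" "a \<in> V" "b \<in> V" by (metis card_2_iff insert_subset)
    then show "e \<in> (\<lambda>(a,b). {a,b}) ` (V \<times> V)" by auto
  qed
  moreover have "countable ((\<lambda>(a,b). {a,b}) ` (V \<times> V))" using assms(2) by simp
  ultimately show ?thesis using countable_subset by blast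
qed

lemma div4_set: "{n::nat. n div 4 = m} = {4*m..<4*m+4}"
proof (intro set_eqI iffI)
  fix n assume "n \<in> {n. n div 4 = m}"
  then show "n \<in> {4*m..<4*m+4}" by auto
next
  fix n assume "n \<in> {4*m..<4*m+4}"
  then show "n \<in> {n. n div 4 = m}" by (auto intro: div_nat_eqI)
qed

lemma part2:
  fixes V :: "'a set" and E :: "'a set set"
  assumes sg: "simple_graph V E" and lf: "locally_finite V E" and d4: "\<forall>v\<in>V. 4 \<le> card (incident E v)"
  shows "\<exists>c. edge_3_coloring E c \<and> (\<forall>v\<in>V. majority_colored E c v)"
proof -
  define G where "G = incident E ` V"
  have gG: "\<forall>g\<in>G. finite g \<and> 4 \<le> card g" using lf d4 unfolding G_def locally_finite_def by auto
  have two2: "finite {g\<in>G. x \<in> g} \<and> card {g\<in>G. x \<in> g} \<le> 2" for x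
  proof (cases "x \<in> E")
    case True
    then have cx: "card x = 2" using sg unfolding simple_graph_def by auto
    then have fx: "finite x" by (metis card.infinite zero_neq_numeral)
    have sub: "{g\<in>G. x \<in> g} \<subseteq> incident E ` x" unfolding G_def incident_def by auto
    have "finite (incident E ` x)" using fx by simp
    moreover have "card (incident E ` x) \<le> 2" using card_image_le[OF fx, of "incident E"] cx by simp
    ultimately show ?thesis using sub by (meson card_mono finite_subset le_trans)
  next
    case False
    then have e: "{g\<in>G. x \<in> g} = {}" unfolding G_def incident_def by auto
    show ?thesis unfolding e by simp
  qed
  obtain c where c3: "\<forall>x. c x < (3::nat)" and cg: "\<forall>g\<in>G. \<forall>a. 2 * card {x\<in>g. c x = a} \<le> card g"
    using core[OF gG] two2 by blast
  have "\<forall>v\<in>V. majority_colored E (\<lambda>e. Suc (c e)) v"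
  proof
    fix v assume v: "v \<in> V"
    then have "incident E v \<in> G" unfolding G_def by simp
    then show "majority_colored E (\<lambda>e. Suc (c e)) v"
      using maj_colored_finite[of E v c] cg gG by blast
  qed
  then show ?thesis using edge3[OF c3] by blast
qed


lemma part1:
  fixes V :: "'a set" and E :: "'a set set" and VF :: "'a set"
  assumes sg: "simple_graph V E" and cV: "countable V" and fd: "\<forall>v\<in>VF. finite_degree_ge E 4 v"
  shows "\<exists>c. edge_3_coloring E c \<and> (\<forall>v\<in>VF. majority_colored E c v) \<and>
             (\<forall>v\<in>V. infinite (incident E v) \<longrightarrow> majority_colored E c v)"
proof -
  have cE: "countable E" using countable_edges[OF sg cV] .
  define Inf where "Inf = {w\<in>V. infinite (incident E w)}"
  define ew where "ew w = (SOME f::'a set \<Rightarrow> nat. bij_betw f (incident E w) UNIV)" for w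
  have bij: "bij_betw (ew w) (incident E w) UNIV" if "w \<in> Inf" for w
  proof -
    have "countable (incident E w)" using cE countable_subset[of "incident E w" E]
      unfolding incident_def by auto
    moreover have "infinite (incident E w)" using that Inf_def by simp
    ultimately obtain f :: "'a set \<Rightarrow> nat" where "bij_betw f (incident E w) UNIV"
      by (rule countableE_infinite)
    then have "\<exists>f::'a set \<Rightarrow> nat. bij_betw f (incident E w) UNIV" by blast
    then show ?thesis unfolding ew_def by (rule someI_ex)
  qed
  define blk where "blk w x = {y \<in> incident E w. ew w y div 4 = ew w x div 4}" for w x
  have cblk: "card (blk w x) = 4" if "w \<in> Inf" for w x
  proof -
    define m where "m = ew w x div 4"
    have "bij_betw (ew w) (blk w x) {n. n div 4 = m}"
    proof (rule bij_betw_subset[OF bij[OF that]])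
      show "blk w x \<subseteq> incident E w" unfolding blk_def by auto
      show "ew w ` blk w x = {n. n div 4 = m}"
      proof
        show "ew w ` blk w x \<subseteq> {n. n div 4 = m}" unfolding blk_def m_def by auto
        show "{n. n div 4 = m} \<subseteq> ew w ` blk w x"
        proof
          fix n assume n: "n \<in> {n. n div 4 = m}"
          have "n \<in> ew w ` incident E w" using bij[OF that] unfolding bij_betw_def by auto
          then obtain y where "y \<in> incident E w" "ew w y = n" by blast
          then show "n \<in> ew w ` blk w x" using n unfolding blk_def m_def by auto
        qed
      qed
    qed
    then have "card (blk w x) = card {n::nat. n div 4 = m}" by (rule bij_betw_same_card)
    also have "\<dots> = 4" unfolding div4_set by simp
    finally show ?thesis .
  qed
  define G where "G = incident E ` VF \<union> {blk w x | w x. w \<in> Inf \<and> x \<in> incident E w}"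
  have gG: "\<forall>g\<in>G. finite g \<and> 4 \<le> card g"
  proof
    fix g assume "g \<in> G"
    then consider (a) v where "v \<in> VF" "g = incident E v" | (b) w x where "w \<in> Inf" "g = blk w x"
      unfolding G_def by blast
    then show "finite g \<and> 4 \<le> card g"
    proof cases
      case a then show ?thesis using fd unfolding finite_degree_ge_def by auto
    next
      case b then have "card g = 4" using cblk by simp
      then show ?thesis by (metis card.infinite order_refl zero_neq_numeral)
    qed
  qed
  have VFfin: "finite (incident E v)" if "v \<in> VF" for v using fd that unfolding finite_degree_ge_def by auto
  have two2: "finite {g\<in>G. x \<in> g} \<and> card {g\<in>G. x \<in> g} \<le> 2" for x
  proof (cases "x \<in> E")
    case True
    then have cx: "card x = 2" using sg unfolding simple_graph_def by auto
    then have fx: "finite x" by (metis card.infinite zero_neq_numeral)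
    define gv where "gv v = (if v \<in> VF then incident E v else blk v x)" for v
    have sub: "{g\<in>G. x \<in> g} \<subseteq> gv ` x"
    proof
      fix g assume g: "g \<in> {g\<in>G. x \<in> g}"
      then have xg: "x \<in> g" by simp
      from g consider (a) v where "v \<in> VF" "g = incident E v"
        | (b) w y where "w \<in> Inf" "y \<in> incident E w" "g = blk w y"
        unfolding G_def by blast
      then show "g \<in> gv ` x"
      proof cases
        case a
        then have "v \<in> x" using xg unfolding incident_def by auto
        then show ?thesis using a unfolding gv_def by auto
      next
        case b
        then have xw: "x \<in> incident E w" and dd: "ew w x div 4 = ew w y div 4"
          using xg unfolding blk_def by auto
        then have "w \<in> x" unfolding incident_def by auto
        moreover have "w \<notin> VF" using VFfin b(1) Inf_def by auto
        moreover have "blk w x = blk w y" unfolding blk_def using dd by simp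
        ultimately show ?thesis using b unfolding gv_def by force
      qed
    qed
    have "finite (gv ` x)" using fx by simp
    moreover have "card (gv ` x) \<le> 2" using card_image_le[OF fx, of gv] cx by simp
    ultimately show ?thesis using sub by (meson card_mono finite_subset le_trans)
  next
    case False
    have "\<forall>g\<in>G. g \<subseteq> E" unfolding G_def blk_def incident_def by auto
    then have e: "{g\<in>G. x \<in> g} = {}" using False by auto
    show ?thesis unfolding e by simp
  qed
  obtain c where c3: "\<forall>x. c x < (3::nat)" and cg: "\<forall>g\<in>G. \<forall>a. 2 * card {x\<in>g. c x = a} \<le> card g"
    using core[OF gG] two2 by blast
  have m1: "\<forall>v\<in>VF. majority_colored E (\<lambda>e. Suc (c e)) v"
  proof
    fix v assume v: "v \<in> VF"
    then have "incident E v \<in> G" unfolding G_def by simp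
    then show "majority_colored E (\<lambda>e. Suc (c e)) v"
      using maj_colored_finite[of E v c] cg gG by blast
  qed
  have m2: "majority_colored E (\<lambda>e. Suc (c e)) v" if v: "v \<in> V" "infinite (incident E v)" for v
  proof -
    have vI: "v \<in> Inf" using v Inf_def by simp
    show ?thesis unfolding majority_colored_def
    proof
      fix \<alpha> :: nat
      define A where "A = {e \<in> incident E v. Suc (c e) = \<alpha>}"
      define B where "B = {e \<in> incident E v. Suc (c e) \<noteq> \<alpha>}"
      have surj: "\<exists>y\<in>B. ew v y div 4 = m" for m
      proof -
        have "4 * m \<in> ew v ` incident E v" using bij[OF vI] unfolding bij_betw_def by auto
        then obtain x0 where x0: "x0 \<in> incident E v" "ew v x0 = 4 * m" by auto
        have bG: "blk v x0 \<in> G" unfolding G_def using vI x0(1) by blast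
        have c4: "card (blk v x0) = 4" using cblk[OF vI] .
        have fb: "finite (blk v x0)" using c4 by (metis card.infinite zero_neq_numeral)
        have "2 * card {y\<in>blk v x0. c y = \<alpha> - 1} \<le> 4" using cg bG c4 by metis
        then have "card {y\<in>blk v x0. c y = \<alpha> - 1} < card (blk v x0)" using c4 by linarith
        then have "{y\<in>blk v x0. c y = \<alpha> - 1} \<noteq> blk v x0" by auto
        then obtain y where y: "y \<in> blk v x0" "c y \<noteq> \<alpha> - 1" by blast
        have "Suc (c y) \<noteq> \<alpha>" using y(2) by auto
        moreover have "y \<in> incident E v" "ew v y div 4 = m" using y(1) x0(2) unfolding blk_def by auto
        ultimately show ?thesis unfolding B_def by blast
      qed
      have "infinite B"
      proof
        assume "finite B"
        then have "finite ((\<lambda>y. ew v y div 4) ` B)" by simp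
        moreover have "(\<lambda>y. ew v y div 4) ` B = UNIV" using surj by (metis (mono_tags, lifting) UNIV_eq_I image_iff)
        ultimately show False by simp
      qed
      then have nB: "(UNIV :: nat set) \<lesssim> B" using infinite_le_lepoll by blast
      have "countable A" using cE countable_subset[of A E] unfolding A_def incident_def by auto
      then obtain f :: "'a set \<Rightarrow> nat" where "inj_on f A" by (rule countableE)
      then have "A \<lesssim> (UNIV :: nat set)" unfolding lepoll_def by blast
      then show "{e \<in> incident E v. Suc (c e) = \<alpha>} \<lesssim> {e \<in> incident E v. Suc (c e) \<noteq> \<alpha>}"
        using nB lepoll_trans unfolding A_def B_def by blast
    qed
  qed
  show ?thesis using edge3[OF c3] m1 m2 by blast
qed

theorem mainTheorem12:
  shows "(\<forall>(V :: 'a set) E VF EF.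
            simple_graph V E \<and> countable V \<and> infinite V \<and>
            subgraph VF EF V E \<and> connected_graph VF EF \<and>
            (\<forall>v\<in>VF. finite_degree_ge E 4 v) \<and>
            (\<forall>v\<in>V - VF. \<exists>u\<in>VF. {u, v} \<in> E)
          \<longrightarrow> (\<exists>c. edge_3_coloring E c \<and>
                   (\<forall>v\<in>VF. majority_colored E c v) \<and>
                   (\<forall>v\<in>V. infinite (incident E v) \<longrightarrow> majority_colored E c v)))
       \<and>
       (\<forall>(V :: 'a set) E.
            simple_graph V E \<and> locally_finite V E \<and>
            (\<forall>v\<in>V. card (incident E v) \<ge> 4)
          \<longrightarrow> (\<exists>c. edge_3_coloring E c \<and> (\<forall>v\<in>V. majority_colored E c v)))"
proof (intro conjI allI impI)
  fix V :: "'a set" and E VF EF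
  assume H: "simple_graph V E \<and> countable V \<and> infinite V \<and>
            subgraph VF EF V E \<and> connected_graph VF EF \<and>
            (\<forall>v\<in>VF. finite_degree_ge E 4 v) \<and>
            (\<forall>v\<in>V - VF. \<exists>u\<in>VF. {u, v} \<in> E)"
  then show "\<exists>c. edge_3_coloring E c \<and>
                   (\<forall>v\<in>VF. majority_colored E c v) \<and>
                   (\<forall>v\<in>V. infinite (incident E v) \<longrightarrow> majority_colored E c v)"
    using part1[of V E VF] by blast
next
  fix V :: "'a set" and E
  assume H: "simple_graph V E \<and> locally_finite V E \<and> (\<forall>v\<in>V. card (incident E v) \<ge> 4)"
  then show "\<exists>c. edge_3_coloring E c \<and> (\<forall>v\<in>V. majority_colored E c v)"
    using part2[of V E] by blast
qed


end
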